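(* Let $n\ge1$, $k\ge 1$, and let $s_1,\dots,s_k$ be positive integers. There are $k$ players who independently each open one cereal box per time step; each box contains one of $n$ coupon types chosen uniformly at random, independently of everything else. Player $i$ is currently missing $s_i$ of the $n$ coupon types, and $X_i(s_i)$ is the number of boxes player $i$ must open until they have all $n$ types. Let $Q_1(s_1,\dots,s_k)$ be the probability that the first player is the fastest to complete the collection, i.e. that $X_1(s_1)=\min\{X_1(s_1),\dots,X_k(s_k)\}$. Then $$Q_1(s_1,\dots,s_k)=1-\sum_{1<i}\frac{s_1}{s_1+s_i}+\sum_{1<i<j}\frac{s_1}{s_1+s_i+s_j}-\sum_{1<i<j<l}\frac{s_1}{s_1+s_i+s_j+s_l}+\cdots+(-1)^{k-1}\frac{s_1}{s_1+\cdots+s_k}+o(1),$$ where the indices $i,j,l,\dots$ range over $\{2,\dots,k\}$.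
   Context: The term $o(1)$ denotes a quantity tending to $0$ as $n\to\infty$ with $k$ and $s_1,\dots,s_k$ fixed. *)

theory Defs
  imports "HOL-Probability.Probability" "HOL-Library.Extended_Nat"
begin

definition coupon_space :: "nat \<Rightarrow> nat \<Rightarrow> (nat \<Rightarrow> nat stream) measure" where
  "coupon_space n k =
     PiM {1..k} (\<lambda>_. stream_space (measure_pmf (pmf_of_set {1..n})))"

definition completion_time :: "nat set \<Rightarrow> nat stream \<Rightarrow> enat" where
  "completion_time M w =
     (if \<exists>t. M \<subseteq> set (stake t w) then enat (LEAST t. M \<subseteq> set (stake t w)) else \<infinity>)"

text \<open>Q_1: probability that player 1 is (one of) the fastest, i.e. X_1 = min X_i.
  M i is the set of types missing for player i.\<close>
definition Q1 :: "nat \<Rightarrow> nat \<Rightarrow> (nat \<Rightarrow> nat set) \<Rightarrow> real" where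
  "Q1 n k M = measure (coupon_space n k)
     {\<omega> \<in> space (coupon_space n k).
        \<forall>i\<in>{1..k}. completion_time (M 1) (\<omega> 1) \<le> completion_time (M i) (\<omega> i)}"

end

theory Submission
  imports Defs
begin

definition cS :: "nat \<Rightarrow> nat stream measure" where
  "cS n = stream_space (measure_pmf (pmf_of_set {1..n}))"

lemma cS_prob: "prob_space (cS n)"
  unfolding cS_def by (rule prob_space.prob_space_stream_space) (rule prob_space_measure_pmf)

lemma space_cS[simp]: "space (cS n) = UNIV"
  by (simp add: cS_def space_stream_space)

lemma avoid_sets[measurable]: "{w. \<forall>i<t. w !! i \<notin> J} \<in> sets (cS n)"
proof -
  have "{w. \<forall>i<t. w !! i \<notin> J} = {w \<in> space (cS n). \<forall>i<t. w !! i \<notin> J}" by simp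
  also have "\<dots> \<in> sets (cS n)" unfolding cS_def by measurable
  finally show ?thesis .
qed

lemma avoid_prob:
  assumes n: "n \<ge> 1" and J: "J \<subseteq> {1..n}"
  shows "measure (cS n) {w. \<forall>i<t. w !! i \<notin> J} = (1 - real (card J) / real n) ^ t"
proof -
  let ?N = "measure_pmf (pmf_of_set {1..n})"
  interpret S: prob_space "cS n" by (rule cS_prob)
  have cJ: "card J \<le> n" using card_mono[OF _ J] by simp
  have nn: "0 \<le> 1 - real (card J) / real n" using cJ n by (simp add: field_simps)
  have pB: "measure ?N (- J) = 1 - real (card J) / real n"
  proof -
    have "measure ?N (- J) = real (card ({1..n} \<inter> - J)) / real (card {1..n})"
      using n by (subst measure_pmf_of_set) auto
    also have "{1..n} \<inter> - J = {1..n} - J" by auto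
    also have "real (card ({1..n} - J)) = real n - real (card J)"
    proof -
      have "card J \<le> n" using card_mono[OF _ J] by simp
      then show ?thesis using J by (subst card_Diff_subset) (auto intro: finite_subset)
    qed
    finally show ?thesis using n by (simp add: field_simps)
  qed
  have "emeasure (cS n) {w. \<forall>i<t. w !! i \<notin> J} = ennreal ((1 - real (card J) / real n) ^ t)"
  proof (induction t)
    case 0
    then show ?case using S.emeasure_space_1 by simp
  next
    case (Suc t)
    have "emeasure (cS n) {w. \<forall>i<Suc t. w !! i \<notin> J} =
       (\<integral>\<^sup>+x. emeasure (cS n) {w \<in> space (cS n). x ## w \<in> {w. \<forall>i<Suc t. w !! i \<notin> J}} \<partial>?N)"
      unfolding cS_def by (rule prob_space.emeasure_stream_space[OF prob_space_measure_pmf]) (rule avoid_sets[unfolded cS_def])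
    also have "\<dots> = (\<integral>\<^sup>+x. indicator (- J) x * emeasure (cS n) {w. \<forall>i<t. w !! i \<notin> J} \<partial>?N)"
    proof (rule nn_integral_cong)
      fix x
      have "{w \<in> space (cS n). x ## w \<in> {w. \<forall>i<Suc t. w !! i \<notin> J}} =
            (if x \<in> J then {} else {w. \<forall>i<t. w !! i \<notin> J})"
        by (auto simp: All_less_Suc2)
      then show "emeasure (cS n) {w \<in> space (cS n). x ## w \<in> {w. \<forall>i<Suc t. w !! i \<notin> J}} =
          indicator (- J) x * emeasure (cS n) {w. \<forall>i<t. w !! i \<notin> J}"
        by (simp add: indicator_def)
    qed
    also have "\<dots> = emeasure ?N (- J) * emeasure (cS n) {w. \<forall>i<t. w !! i \<notin> J}"
      by (subst nn_integral_multc) auto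
    also have "\<dots> = ennreal ((1 - real (card J) / real n) ^ Suc t)"
      using Suc pB nn by (simp add: measure_pmf.emeasure_eq_measure ennreal_mult[symmetric])
    finally show ?case .
  qed
  then show ?thesis
    using nn by (simp add: S.emeasure_eq_measure ennreal_inj)
qed


lemma in_set_stake: "c \<in> set (stake t w) \<longleftrightarrow> (\<exists>i<t. w !! i = c)"
  by (auto simp: in_set_conv_nth)

lemma UNIV_cS[simp]: "UNIV \<in> sets (cS n)"
  using sets.top[of "cS n"] by simp

lemma seen_sets[measurable]: "finite M \<Longrightarrow> {w. M \<subseteq> set (stake t w)} \<in> sets (cS n)"
proof -
  assume fM: "finite M"
  have "{w. M \<subseteq> set (stake t w)} = space (cS n) - (\<Union>c\<in>M. {w. \<forall>i<t. w !! i \<notin> {c}})"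
    by (auto simp: subset_iff in_set_stake)
  also have "\<dots> \<in> sets (cS n)" using fM by (intro sets.Diff sets.finite_UN avoid_sets) auto
  finally show ?thesis .
qed

definition Fc :: "nat \<Rightarrow> nat set \<Rightarrow> nat \<Rightarrow> real" where
  "Fc n M t = measure (cS n) {w. M \<subseteq> set (stake t w)}"

lemma Fc_formula:
  assumes n: "n \<ge> 1" and M: "M \<subseteq> {1..n}"
  shows "Fc n M t = (\<Sum>B\<in>Pow M. (-1) ^ card B * (1 - real (card B) / real n) ^ t)"
proof -
  interpret S: prob_space "cS n" by (rule cS_prob)
  have fM: "finite M" using M finite_subset by blast
  interpret IE: Incl_Excl "\<lambda>X. X \<in> sets (cS n)" "measure (cS n)"
    by standard (auto simp: disjnt_def S.finite_measure_Union)
  let ?G = "\<lambda>c. {w. \<forall>i<t. w !! i \<notin> {c}}"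
  have U: "measure (cS n) (\<Union>(?G ` M)) =
      (\<Sum>B | B \<subseteq> M \<and> B \<noteq> {}. (- 1) ^ (card B + 1) * measure (cS n) (\<Inter> (?G ` B)))"
    by (rule IE.restricted_indexed) (use fM avoid_sets in blast)+
  have I: "\<Inter> (?G ` B) = {w. \<forall>i<t. w !! i \<notin> B}" if "B \<noteq> {}" for B
    using that by auto
  have "Fc n M t = 1 - measure (cS n) (\<Union>(?G ` M))"
  proof -
    have "{w. M \<subseteq> set (stake t w)} = space (cS n) - \<Union>(?G ` M)"
      by (auto simp: subset_iff in_set_stake)
    moreover have "\<Union>(?G ` M) \<in> sets (cS n)" using fM by (intro sets.finite_UN avoid_sets) auto
    ultimately show ?thesis unfolding Fc_def using fM S.prob_compl[of "\<Union>(?G ` M)"]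
      by simp
  qed
  also have "\<dots> = 1 - (\<Sum>B | B \<subseteq> M \<and> B \<noteq> {}. (- 1) ^ (card B + 1) * (1 - real (card B) / real n) ^ t)"
    unfolding U
  proof (intro arg_cong2[where f="(-)"] refl sum.cong)
    fix B assume "B \<in> {B. B \<subseteq> M \<and> B \<noteq> {}}"
    then have "B \<subseteq> M" "B \<noteq> {}" by auto
    then show "(- 1) ^ (card B + 1) * measure (cS n) (\<Inter> (?G ` B)) =
       (- 1) ^ (card B + 1) * (1 - real (card B) / real n) ^ t"
      using M n I[OF \<open>B \<noteq> {}\<close>] avoid_prob[OF n, of B t] by simp
  qed
  also have "\<dots> = (\<Sum>B\<in>Pow M. (-1) ^ card B * (1 - real (card B) / real n) ^ t)"
  proof -
    have e: "{B. B \<subseteq> M \<and> B \<noteq> {}} = Pow M - {{}}" by auto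
    have "(\<Sum>B\<in>Pow M. (-1) ^ card B * (1 - real (card B) / real n) ^ t) =
          1 + (\<Sum>B\<in>Pow M - {{}}. (-1) ^ card B * (1 - real (card B) / real n) ^ t)"
      using fM by (subst sum.remove[of _ "{}"]) auto
    then show ?thesis unfolding e by (simp add: sum_negf)
  qed
  finally show ?thesis .
qed


lemma pow_diff_le:
  fixes a b :: real
  assumes "0 \<le> a" "a \<le> b"
  shows "b ^ t - a ^ t \<le> real t * (b - a) * b ^ (t - 1)"
proof -
  have "b ^ t - a ^ t = (b - a) * (\<Sum>i<t. a ^ (t - Suc i) * b ^ i)"
    by (rule power_diff_sumr2)
  also have "(\<Sum>i<t. a ^ (t - Suc i) * b ^ i) \<le> (\<Sum>i<t. b ^ (t - 1))"
  proof (rule sum_mono)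
    fix i assume i: "i \<in> {..<t}"
    have "a ^ (t - Suc i) * b ^ i \<le> b ^ (t - Suc i) * b ^ i"
      using assms by (intro mult_right_mono power_mono) auto
    also have "\<dots> = b ^ (t - 1)" using i by (simp add: power_add[symmetric])
    finally show "a ^ (t - Suc i) * b ^ i \<le> b ^ (t - 1)" .
  qed
  then have "(b - a) * (\<Sum>i<t. a ^ (t - Suc i) * b ^ i) \<le> (b - a) * (\<Sum>i<t. b ^ (t - 1))"
    using assms by (intro mult_left_mono) auto
  finally show ?thesis by (simp add: algebra_simps)
qed

lemma second_order:
  fixes x :: real
  assumes "0 \<le> x" "x \<le> 1"
  shows "(1 - x) ^ j \<le> 1 - real j * x + (real j)^2 * x^2"
proof (induction j)
  case 0 then show ?case by simp
next
  case (Suc j)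
  have "(1 - x) ^ Suc j = (1 - x) * (1 - x) ^ j" by simp
  also have "\<dots> \<le> (1 - x) * (1 - real j * x + (real j)^2 * x^2)"
    using Suc assms by (intro mult_left_mono) auto
  also have "\<dots> \<le> 1 - real (Suc j) * x + (real (Suc j))^2 * x^2"
  proof -
    have "(1 - x) * (1 - real j * x + (real j)^2 * x^2) =
       1 - real (Suc j) * x + (real j + (real j)^2) * x^2 - (real j)^2 * x^3"
      by (simp add: algebra_simps power2_eq_square power3_eq_cube)
    also have "\<dots> \<le> 1 - real (Suc j) * x + (real (Suc j))^2 * x^2"
    proof -
      have "(real j + (real j)^2) * x^2 \<le> (real (Suc j))^2 * x^2"
        by (intro mult_right_mono) (auto simp: power2_eq_square algebra_simps)
      moreover have "0 \<le> (real j)^2 * x^3" using assms by simp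
      ultimately show ?thesis by linarith
    qed
    finally show ?thesis .
  qed
  finally show ?case .
qed

lemma tq_le:
  fixes n :: nat
  assumes n: "n \<ge> 1"
  shows "real (Suc m) * (1 - 1 / real n) ^ m \<le> real n"
proof -
  define x where "x = 1 / real n"
  have x0: "0 \<le> x" and x1: "x \<le> 1" using n by (auto simp: x_def)
  have "1 + real m * x \<le> (1 + x) ^ m" by (rule Bernoulli_inequality) (use x0 in auto)
  then have "(1 - x) ^ m * (1 + real m * x) \<le> (1 - x) ^ m * (1 + x) ^ m"
    using x1 by (intro mult_left_mono) auto
  also have "\<dots> = (1 - x^2) ^ m" by (simp add: power_mult_distrib[symmetric] algebra_simps power2_eq_square)
  also have "\<dots> \<le> 1" using x0 x1 by (intro power_le_one) (auto simp: power_le_one)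
  finally have A: "(1 - x) ^ m * (1 + real m * x) \<le> 1" .
  have "real (Suc m) \<le> real n * (1 + real m * x)" using n by (simp add: x_def field_simps)
  then have "real (Suc m) * (1 - x) ^ m \<le> real n * (1 + real m * x) * (1 - x) ^ m"
    using x1 by (intro mult_right_mono) auto
  also have "\<dots> = real n * ((1 - x) ^ m * (1 + real m * x))" by simp
  also have "\<dots> \<le> real n * 1" using A by (intro mult_left_mono) auto
  finally show ?thesis by (simp add: x_def)
qed

lemma term_bound:
  fixes n j t :: nat
  assumes n: "n \<ge> 1" and j: "j \<le> n"
  shows "\<bar>(1 - real j / real n) ^ t - ((1 - 1 / real n) ^ j) ^ t\<bar> \<le> (real j)^2 / real n"
proof (cases "j = 0 \<or> t = 0")
  case True then show ?thesis by auto
next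
  case False
  then obtain m where t: "t = Suc m" and j1: "j \<ge> 1" by (cases t) auto
  define q where "q = 1 - 1 / real n"
  define a where "a = 1 - real j / real n"
  define b where "b = q ^ j"
  have q0: "0 \<le> q" and q1: "q \<le> 1" using n by (auto simp: q_def)
  have a0: "0 \<le> a" using j n by (auto simp: a_def field_simps)
  have ab: "a \<le> b"
  proof -
    have "1 + real j * (- 1 / real n) \<le> (1 + (- 1 / real n)) ^ j"
      by (rule Bernoulli_inequality) (use n in auto)
    then show ?thesis by (simp add: a_def b_def q_def)
  qed
  have bq: "b \<le> q" unfolding b_def using j1 q0 q1 by (metis power_decreasing power_one_right)
  have ba: "b - a \<le> (real j)^2 / (real n)^2"
  proof -
    have "q ^ j \<le> 1 - real j * (1 / real n) + (real j)^2 * (1 / real n)^2"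
      unfolding q_def by (rule second_order) (use n in auto)
    then show ?thesis by (simp add: a_def b_def power_divide)
  qed
  have "b ^ t - a ^ t \<le> real t * (b - a) * b ^ (t - 1)" by (rule pow_diff_le[OF a0 ab])
  also have "\<dots> \<le> real t * ((real j)^2 / (real n)^2) * q ^ m"
  proof -
    have "b ^ m \<le> q ^ m" using a0 ab bq by (intro power_mono) auto
    then show ?thesis using ba a0 ab bq t by (intro mult_mono) auto
  qed
  also have "\<dots> = (real (Suc m) * q ^ m) * ((real j)^2 / (real n)^2)" using t by simp
  also have "\<dots> \<le> real n * ((real j)^2 / (real n)^2)"
    using tq_le[OF n, of m] by (intro mult_right_mono) (auto simp: q_def)
  also have "\<dots> = (real j)^2 / real n" using n by (simp add: power2_eq_square)
  finally have "b ^ t - a ^ t \<le> (real j)^2 / real n" .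
  moreover have "a ^ t \<le> b ^ t" using a0 ab by (intro power_mono)
  ultimately show ?thesis by (simp add: a_def b_def q_def power_mult)
qed


definition uu :: "nat \<Rightarrow> nat \<Rightarrow> real" where
  "uu n t = 1 - (1 - 1 / real n) ^ t"

lemma uu_pow_expand:
  assumes "finite M"
  shows "(uu n t) ^ card M = (\<Sum>B\<in>Pow M. (-1) ^ card B * ((1 - 1 / real n) ^ card B) ^ t)"
proof -
  let ?q = "(1 - 1 / real n) ^ t"
  have "(uu n t) ^ card M = (\<Prod>x\<in>M. (- ?q) + 1)" by (simp add: uu_def)
  also have "\<dots> = (\<Sum>X\<in>Pow M. (\<Prod>x\<in>X. - ?q) * (\<Prod>x\<in>M - X. 1))"
    by (rule prod_add[OF assms])
  also have "\<dots> = (\<Sum>B\<in>Pow M. (-1) ^ card B * ((1 - 1 / real n) ^ card B) ^ t)"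
    by (intro sum.cong refl) (simp add: power_minus' power_mult[symmetric] mult.commute power_mult_distrib)
  finally show ?thesis .
qed

lemma Fc_approx:
  assumes n: "n \<ge> 1" and M: "M \<subseteq> {1..n}"
  shows "\<bar>Fc n M t - (uu n t) ^ card M\<bar> \<le> 2 ^ card M * (real (card M))^2 / real n"
proof -
  have fM: "finite M" using M finite_subset by blast
  have "Fc n M t - (uu n t) ^ card M =
     (\<Sum>B\<in>Pow M. (-1) ^ card B * ((1 - real (card B) / real n) ^ t - ((1 - 1 / real n) ^ card B) ^ t))"
    unfolding Fc_formula[OF n M] uu_pow_expand[OF fM] by (simp add: sum_subtractf algebra_simps)
  also have "\<bar>\<dots>\<bar> \<le> (\<Sum>B\<in>Pow M. \<bar>(-1) ^ card B * ((1 - real (card B) / real n) ^ t - ((1 - 1 / real n) ^ card B) ^ t)\<bar>)"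
    by (rule sum_abs)
  also have "\<dots> \<le> (\<Sum>B\<in>Pow M. (real (card M))^2 / real n)"
  proof (rule sum_mono)
    fix B assume B: "B \<in> Pow M"
    then have cB: "card B \<le> card M" using fM by (auto intro: card_mono)
    have cM: "card M \<le> n" using card_mono[OF _ M] by simp
    have "\<bar>(-1) ^ card B * ((1 - real (card B) / real n) ^ t - ((1 - 1 / real n) ^ card B) ^ t)\<bar>
        = \<bar>(1 - real (card B) / real n) ^ t - ((1 - 1 / real n) ^ card B) ^ t\<bar>"
      by (simp add: abs_mult)
    also have "\<dots> \<le> (real (card B))^2 / real n" by (rule term_bound) (use n cB cM in auto)
    also have "\<dots> \<le> (real (card M))^2 / real n"
      using cB by (intro divide_right_mono power_mono) auto
    finally show "\<bar>(-1) ^ card B * ((1 - real (card B) / real n) ^ t - ((1 - 1 / real n) ^ card B) ^ t)\<bar>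
        \<le> (real (card M))^2 / real n" .
  qed
  also have "\<dots> = 2 ^ card M * (real (card M))^2 / real n"
    using fM by (simp add: card_Pow)
  finally show ?thesis .
qed


lemma R1:
  fixes x y :: real and a b :: nat
  assumes y0: "0 \<le> y" and yx: "y \<le> x"
  shows "real b * (x^(a+b) - y^(a+b)) \<le> real (a+b) * x^a * (x^b - y^b)"
proof (cases "b = 0")
  case True then show ?thesis by simp
next
  case False
  define f where "f = (\<lambda>z::real. real b * (x^(a+b) - z^(a+b)) - real (a+b) * x^a * (x^b - z^b))"
  have "f y \<le> f x"
  proof (rule DERIV_nonneg_imp_nondecreasing[OF yx])
    fix z assume z: "y \<le> z" "z \<le> x"
    have D: "DERIV f z :> (- (real b * (real (a+b) * z^(a+b-1))) + real (a+b) * x^a * (real b * z^(b-1)))"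
      unfolding f_def by (auto intro!: derivative_eq_intros)
    have "z^(a+b-1) = z^a * z^(b-1)" using False by (simp add: power_add[symmetric])
    moreover have "z^a * z^(b-1) \<le> x^a * z^(b-1)"
      using z y0 by (intro mult_right_mono power_mono) auto
    ultimately have "0 \<le> real b * real (a+b) * (x^a * z^(b-1) - z^(a+b-1))"
      by (intro mult_nonneg_nonneg) auto
    then have "0 \<le> (- (real b * (real (a+b) * z^(a+b-1))) + real (a+b) * x^a * (real b * z^(b-1)))"
      by (simp add: algebra_simps)
    with D show "\<exists>y. DERIV f z :> y \<and> 0 \<le> y" by blast
  qed
  then show ?thesis by (simp add: f_def)
qed

lemma R2:
  fixes x y :: real and a b :: nat
  assumes y0: "0 \<le> y" and yx: "y \<le> x"
  shows "real (a+b) * y^a * (x^b - y^b) \<le> real b * (x^(a+b) - y^(a+b))"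
proof (cases "b = 0")
  case True then show ?thesis by simp
next
  case False
  define f where "f = (\<lambda>w::real. real b * (w^(a+b) - y^(a+b)) - real (a+b) * y^a * (w^b - y^b))"
  have "f y \<le> f x"
  proof (rule DERIV_nonneg_imp_nondecreasing[OF yx])
    fix z assume z: "y \<le> z" "z \<le> x"
    have D: "DERIV f z :> (real b * (real (a+b) * z^(a+b-1)) - real (a+b) * y^a * (real b * z^(b-1)))"
      unfolding f_def by (auto intro!: derivative_eq_intros)
    have "z^(a+b-1) = z^a * z^(b-1)" using False by (simp add: power_add[symmetric])
    moreover have "y^a * z^(b-1) \<le> z^a * z^(b-1)"
      using z y0 by (intro mult_right_mono power_mono) auto
    ultimately have "0 \<le> real b * real (a+b) * (z^(a+b-1) - y^a * z^(b-1))"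
      by (intro mult_nonneg_nonneg) auto
    then have "0 \<le> (real b * (real (a+b) * z^(a+b-1)) - real (a+b) * y^a * (real b * z^(b-1)))"
      by (simp add: algebra_simps)
    with D show "\<exists>y. DERIV f z :> y \<and> 0 \<le> y" by blast
  qed
  then show ?thesis by (simp add: f_def)
qed

lemma P1:
  fixes x y :: real and a :: nat
  assumes y0: "0 \<le> y" and yx: "y \<le> x" and x1: "x \<le> 1"
  shows "x^a - y^a \<le> real a * (x - y)"
proof (cases "a = 0")
  case True then show ?thesis by simp
next
  case False
  define f where "f = (\<lambda>w::real. real a * w - w^a)"
  have "f y \<le> f x"
  proof (rule DERIV_nonneg_imp_nondecreasing[OF yx])
    fix z assume z: "y \<le> z" "z \<le> x"
    have D: "DERIV f z :> (real a - real a * z^(a-1))"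
      unfolding f_def by (auto intro!: derivative_eq_intros)
    have "z^(a-1) \<le> 1" using z y0 x1 by (intro power_le_one) auto
    then have "0 \<le> real a - real a * z^(a-1)"
      by (simp add: mult_left_le)
    with D show "\<exists>y. DERIV f z :> y \<and> 0 \<le> y" by blast
  qed
  then show ?thesis by (simp add: f_def algebra_simps)
qed


lemma RS:
  fixes v :: "nat \<Rightarrow> real" and a b :: nat and \<delta> :: real
  assumes v0: "v 0 = 0" and mono: "\<And>t. v t \<le> v (Suc t)" and le1: "\<And>t. v t \<le> 1"
    and step: "\<And>t. v (Suc t) - v t \<le> \<delta>" and a: "a \<ge> 1"
  shows "real b / real (a+b) * v N ^ (a+b) \<le> (\<Sum>t<N. v (Suc t) ^ a * (v (Suc t) ^ b - v t ^ b))"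
    and "(\<Sum>t<N. v (Suc t) ^ a * (v (Suc t) ^ b - v t ^ b)) \<le> real b / real (a+b) * v N ^ (a+b) + real a * \<delta>"
proof -
  have nn: "0 \<le> v t" for t
  proof (induction t)
    case 0 then show ?case using v0 by simp
  next
    case (Suc t) then show ?case using mono[of t] by linarith
  qed
  have d0: "0 \<le> \<delta>" using step[of 0] mono[of 0] by linarith
  have ab: "real (a+b) > 0" using a by simp
  show "real b / real (a+b) * v N ^ (a+b) \<le> (\<Sum>t<N. v (Suc t) ^ a * (v (Suc t) ^ b - v t ^ b))"
  proof (induction N)
    case 0 then show ?case using v0 a by (simp add: power_0_left)
  next
    case (Suc N)
    have r: "real b * (v (Suc N) ^ (a+b) - v N ^ (a+b)) \<le> real (a+b) * v (Suc N) ^ a * (v (Suc N) ^ b - v N ^ b)"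
      by (rule R1) (use nn mono in auto)
    then have "real b / real (a+b) * (v (Suc N) ^ (a+b) - v N ^ (a+b)) \<le> v (Suc N) ^ a * (v (Suc N) ^ b - v N ^ b)"
      using ab by (simp add: field_simps)
    then show ?case using Suc by (simp add: algebra_simps)
  qed
  have "(\<Sum>t<N. v (Suc t) ^ a * (v (Suc t) ^ b - v t ^ b)) \<le> real b / real (a+b) * v N ^ (a+b) + real a * \<delta> * v N ^ b"
  proof (induction N)
    case 0 then show ?case using v0 a d0 by (cases b) auto
  next
    case (Suc N)
    let ?x = "v (Suc N)" and ?y = "v N"
    have r: "real (a+b) * ?y ^ a * (?x ^ b - ?y ^ b) \<le> real b * (?x ^ (a+b) - ?y ^ (a+b))"
      by (rule R2) (use nn mono in auto)
    then have r': "?y ^ a * (?x ^ b - ?y ^ b) \<le> real b / real (a+b) * (?x ^ (a+b) - ?y ^ (a+b))"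
      using ab by (simp add: field_simps)
    have p: "?x ^ a - ?y ^ a \<le> real a * \<delta>"
    proof -
      have "?x ^ a - ?y ^ a \<le> real a * (?x - ?y)" by (rule P1) (use nn mono le1 in auto)
      also have "\<dots> \<le> real a * \<delta>" using step[of N] by (intro mult_left_mono) auto
      finally show ?thesis .
    qed
    have bb: "0 \<le> ?x ^ b - ?y ^ b" using nn mono by (simp add: power_mono)
    have "?x ^ a * (?x ^ b - ?y ^ b) = ?y ^ a * (?x ^ b - ?y ^ b) + (?x ^ a - ?y ^ a) * (?x ^ b - ?y ^ b)"
      by (simp add: algebra_simps)
    also have "\<dots> \<le> real b / real (a+b) * (?x ^ (a+b) - ?y ^ (a+b)) + real a * \<delta> * (?x ^ b - ?y ^ b)"
      using r' p bb by (intro add_mono mult_right_mono) auto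
    finally have "?x ^ a * (?x ^ b - ?y ^ b) \<le> real b / real (a+b) * (?x ^ (a+b) - ?y ^ (a+b)) + real a * \<delta> * (?x ^ b - ?y ^ b)" .
    then show ?case using Suc by (simp add: algebra_simps)
  qed
  also have "\<dots> \<le> real b / real (a+b) * v N ^ (a+b) + real a * \<delta>"
  proof -
    have "v N ^ b \<le> 1" using nn le1 by (intro power_le_one) auto
    then have "real a * \<delta> * v N ^ b \<le> real a * \<delta> * 1" using d0 by (intro mult_left_mono) auto
    then show ?thesis by simp
  qed
  finally show "(\<Sum>t<N. v (Suc t) ^ a * (v (Suc t) ^ b - v t ^ b)) \<le> real b / real (a+b) * v N ^ (a+b) + real a * \<delta>" .
qed

lemma SBP:
  fixes F w :: "nat \<Rightarrow> real"
  shows "(\<Sum>t<N. (F (Suc t) - F t) * w t) = F N * w N - F 0 * w 0 - (\<Sum>t<N. F (Suc t) * (w (Suc t) - w t))"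
  by (induction N) (auto simp: algebra_simps)

lemma DW:
  fixes v F :: "nat \<Rightarrow> real" and a b :: nat and \<delta> \<epsilon> :: real
  assumes v0: "v 0 = 0" and mono: "\<And>t. v t \<le> v (Suc t)" and le1: "\<And>t. v t \<le> 1"
    and step: "\<And>t. v (Suc t) - v t \<le> \<delta>" and a: "a \<ge> 1"
    and F0: "F 0 = 0" and Fap: "\<And>t. \<bar>F t - v t ^ a\<bar> \<le> \<epsilon>"
  shows "\<bar>(\<Sum>t<N. (F (Suc t) - F t) * v t ^ b) - real a / real (a+b)\<bar> \<le> 2 * \<epsilon> + real a * \<delta> + (1 - v N ^ (a+b))"
proof -
  have nn: "0 \<le> v t" for t
  proof (induction t)
    case 0 then show ?case using v0 by simp
  next
    case (Suc t) then show ?case using mono[of t] by linarith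
  qed
  have ab: "real (a+b) > 0" using a by simp
  let ?w = "\<lambda>t. v t ^ b"
  have sbp: "(\<Sum>t<N. (F (Suc t) - F t) * ?w t) = F N * ?w N - (\<Sum>t<N. F (Suc t) * (?w (Suc t) - ?w t))"
    using SBP[of F ?w N] F0 by simp
  have dw: "0 \<le> ?w (Suc t) - ?w t" for t using nn mono by (simp add: power_mono)
  have tel: "(\<Sum>t<N. ?w (Suc t) - ?w t) = ?w N - ?w 0" by (rule sum_lessThan_telescope)
  have w01: "0 \<le> ?w t" "?w t \<le> 1" for t using nn le1 by (auto intro: power_le_one)
  have A: "\<bar>(\<Sum>t<N. F (Suc t) * (?w (Suc t) - ?w t)) - (\<Sum>t<N. v (Suc t) ^ a * (?w (Suc t) - ?w t))\<bar> \<le> \<epsilon>"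
  proof -
    have "\<bar>(\<Sum>t<N. F (Suc t) * (?w (Suc t) - ?w t)) - (\<Sum>t<N. v (Suc t) ^ a * (?w (Suc t) - ?w t))\<bar>
        = \<bar>\<Sum>t<N. (F (Suc t) - v (Suc t) ^ a) * (?w (Suc t) - ?w t)\<bar>"
      by (simp add: sum_subtractf[symmetric] algebra_simps)
    also have "\<dots> \<le> (\<Sum>t<N. \<bar>(F (Suc t) - v (Suc t) ^ a) * (?w (Suc t) - ?w t)\<bar>)" by (rule sum_abs)
    also have "\<dots> \<le> (\<Sum>t<N. \<epsilon> * (?w (Suc t) - ?w t))"
    proof (rule sum_mono)
      fix t
      show "\<bar>(F (Suc t) - v (Suc t) ^ a) * (?w (Suc t) - ?w t)\<bar> \<le> \<epsilon> * (?w (Suc t) - ?w t)"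
        using Fap[of "Suc t"] dw[of t] by (simp add: abs_mult mult_right_mono)
    qed
    also have "\<dots> = \<epsilon> * (?w N - ?w 0)" by (simp add: sum_distrib_left[symmetric] tel)
    also have "\<dots> \<le> \<epsilon>"
    proof -
      have e0: "0 \<le> \<epsilon>" using Fap[of 0] by linarith
      have "?w N - ?w 0 \<le> 1" using w01[of N] w01[of 0] by linarith
      then show ?thesis using e0 by (simp add: mult_left_le)
    qed
    finally show ?thesis .
  qed
  have B: "\<bar>F N * ?w N - v N ^ (a+b)\<bar> \<le> \<epsilon>"
  proof -
    have "\<bar>F N * ?w N - v N ^ (a+b)\<bar> = \<bar>F N - v N ^ a\<bar> * ?w N"
    proof -
      have "F N * ?w N - v N ^ (a+b) = (F N - v N ^ a) * ?w N" by (simp add: power_add algebra_simps)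
      then show ?thesis using w01[of N] by (simp add: abs_mult)
    qed
    also have "\<dots> \<le> \<epsilon> * 1" using Fap[of N] w01[of N] by (intro mult_mono) auto
    finally show ?thesis by simp
  qed
  have C1: "real b / real (a+b) * v N ^ (a+b) \<le> (\<Sum>t<N. v (Suc t) ^ a * (?w (Suc t) - ?w t))"
    and C2: "(\<Sum>t<N. v (Suc t) ^ a * (?w (Suc t) - ?w t)) \<le> real b / real (a+b) * v N ^ (a+b) + real a * \<delta>"
    using RS[OF v0 mono le1 step a] by auto
  have vN: "0 \<le> v N ^ (a+b)" "v N ^ (a+b) \<le> 1" using nn le1 by (auto intro: power_le_one)
  have id: "v N ^ (a+b) - real b / real (a+b) * v N ^ (a+b) = real a / real (a+b) * v N ^ (a+b)"
    using ab by (simp add: field_simps)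
  have D: "0 \<le> real a / real (a+b) - real a / real (a+b) * v N ^ (a+b)"
   and D2: "real a / real (a+b) - real a / real (a+b) * v N ^ (a+b) \<le> 1 - v N ^ (a+b)"
  proof -
    have q: "0 \<le> real a / real (a+b)" "real a / real (a+b) \<le> 1" using ab by auto
    have "real a / real (a+b) - real a / real (a+b) * v N ^ (a+b) = real a / real (a+b) * (1 - v N ^ (a+b))"
      by (simp only: right_diff_distrib mult_1_right)
    moreover have "real a / real (a+b) * (1 - v N ^ (a+b)) \<le> 1 * (1 - v N ^ (a+b))"
      using q vN by (intro mult_right_mono) auto
    moreover have "0 \<le> real a / real (a+b) * (1 - v N ^ (a+b))" using q vN by auto
    ultimately show "0 \<le> real a / real (a+b) - real a / real (a+b) * v N ^ (a+b)"
      "real a / real (a+b) - real a / real (a+b) * v N ^ (a+b) \<le> 1 - v N ^ (a+b)" by auto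
  qed
  have d0: "0 \<le> \<delta>" using step[of 0] mono[of 0] by linarith
  show ?thesis
    unfolding sbp using A B C1 C2 id D D2 d0 a
    by (simp add: abs_le_iff)
qed


lemma prod_diff_bound:
  fixes x y :: "nat \<Rightarrow> real"
  assumes "finite I" "\<And>i. i \<in> I \<Longrightarrow> 0 \<le> x i \<and> x i \<le> 1" "\<And>i. i \<in> I \<Longrightarrow> 0 \<le> y i \<and> y i \<le> 1"
  shows "\<bar>(\<Prod>i\<in>I. x i) - (\<Prod>i\<in>I. y i)\<bar> \<le> (\<Sum>i\<in>I. \<bar>x i - y i\<bar>)"
  using assms
proof (induction I rule: finite_induct)
  case empty then show ?case by simp
next
  case (insert a I)
  let ?X = "\<Prod>i\<in>I. x i" and ?Y = "\<Prod>i\<in>I. y i"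
  have Y: "0 \<le> ?Y" "?Y \<le> 1" using insert.prems by (auto intro: prod_nonneg prod_le_1)
  have xa: "0 \<le> x a" "x a \<le> 1" using insert.prems by auto
  have "x a * ?X - y a * ?Y = x a * (?X - ?Y) + (x a - y a) * ?Y" by (simp add: algebra_simps)
  then have "\<bar>x a * ?X - y a * ?Y\<bar> \<le> \<bar>x a\<bar> * \<bar>?X - ?Y\<bar> + \<bar>x a - y a\<bar> * \<bar>?Y\<bar>"
    by (metis abs_mult abs_triangle_ineq)
  also have "\<dots> \<le> 1 * \<bar>?X - ?Y\<bar> + \<bar>x a - y a\<bar> * 1"
    using xa Y by (intro add_mono mult_mono) auto
  also have "\<dots> \<le> (\<Sum>i\<in>I. \<bar>x i - y i\<bar>) + \<bar>x a - y a\<bar>"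
    using insert by simp
  finally show ?case using insert by (simp add: add.commute)
qed

lemma core:
  fixes v :: "nat \<Rightarrow> real" and F :: "nat \<Rightarrow> nat \<Rightarrow> real" and s :: "nat \<Rightarrow> nat"
    and I :: "nat set" and \<delta> \<epsilon> :: real and N :: nat
  assumes v0: "v 0 = 0" and mono: "\<And>t. v t \<le> v (Suc t)" and le1: "\<And>t. v t \<le> 1"
    and step: "\<And>t. v (Suc t) - v t \<le> \<delta>"
    and I: "finite I" and s1: "s 1 \<ge> 1"
    and F0: "F 1 0 = 0" and Fmono: "\<And>t. F 1 t \<le> F 1 (Suc t)"
    and F01: "\<And>i t. i \<in> insert 1 I \<Longrightarrow> 0 \<le> F i t \<and> F i t \<le> 1"
    and Fap: "\<And>i t. i \<in> insert 1 I \<Longrightarrow> \<bar>F i t - v t ^ s i\<bar> \<le> \<epsilon>"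
  shows "\<bar>(\<Sum>t<N. (F 1 (Suc t) - F 1 t) * (\<Prod>i\<in>I. 1 - F i t))
          - (\<Sum>S\<in>Pow I. (-1) ^ card S * real (s 1) / real (s 1 + (\<Sum>i\<in>S. s i)))\<bar>
       \<le> real (card I) * \<epsilon> + 2 ^ card I * (2 * \<epsilon> + real (s 1) * \<delta> + (1 - v N ^ (s 1 + (\<Sum>i\<in>I. s i))))"
proof -
  have nn: "0 \<le> v t" for t
  proof (induction t)
    case 0 then show ?case using v0 by simp
  next
    case (Suc t) then show ?case using mono[of t] by linarith
  qed
  let ?a = "s 1"
  let ?D = "\<lambda>t. F 1 (Suc t) - F 1 t"
  let ?g = "\<lambda>t. \<Prod>i\<in>I. 1 - F i t"
  let ?h = "\<lambda>t. \<Prod>i\<in>I. 1 - v t ^ s i"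
  let ?L = "\<lambda>S. real (s 1) / real (s 1 + (\<Sum>i\<in>S. s i))"
  let ?X = "\<lambda>S. \<Sum>t<N. ?D t * v t ^ (\<Sum>i\<in>S. s i)"
  have D0: "0 \<le> ?D t" for t using Fmono[of t] by simp
  have sumD: "(\<Sum>t<N. ?D t) \<le> 1"
    using sum_lessThan_telescope[of "F 1" N] F0 F01[of 1 N] by simp
  have gh: "\<bar>?g t - ?h t\<bar> \<le> real (card I) * \<epsilon>" for t
  proof -
    have "\<bar>?g t - ?h t\<bar> \<le> (\<Sum>i\<in>I. \<bar>(1 - F i t) - (1 - v t ^ s i)\<bar>)"
      by (rule prod_diff_bound[OF I]) (use F01 nn le1 in \<open>auto intro: power_le_one\<close>)
    also have "\<dots> \<le> (\<Sum>i\<in>I. \<epsilon>)"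
      by (rule sum_mono) (use Fap in \<open>auto simp: abs_minus_commute\<close>)
    finally show ?thesis by simp
  qed
  have A: "\<bar>(\<Sum>t<N. ?D t * ?g t) - (\<Sum>t<N. ?D t * ?h t)\<bar> \<le> real (card I) * \<epsilon>"
  proof -
    have "\<bar>(\<Sum>t<N. ?D t * ?g t) - (\<Sum>t<N. ?D t * ?h t)\<bar> = \<bar>\<Sum>t<N. ?D t * (?g t - ?h t)\<bar>"
      by (simp add: sum_subtractf[symmetric] algebra_simps)
    also have "\<dots> \<le> (\<Sum>t<N. \<bar>?D t * (?g t - ?h t)\<bar>)" by (rule sum_abs)
    also have "\<dots> \<le> (\<Sum>t<N. ?D t * (real (card I) * \<epsilon>))"
      by (rule sum_mono) (use D0 gh in \<open>auto simp: abs_mult intro: mult_left_mono\<close>)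
    also have "\<dots> = (\<Sum>t<N. ?D t) * (real (card I) * \<epsilon>)" by (simp add: sum_distrib_right)
    also have "\<dots> \<le> 1 * (real (card I) * \<epsilon>)"
    proof -
      have "0 \<le> \<epsilon>" using Fap[of 1 0] by fastforce
      then show ?thesis using sumD by (intro mult_right_mono) auto
    qed
    finally show ?thesis by simp
  qed
  have hexp: "?h t = (\<Sum>S\<in>Pow I. (-1) ^ card S * v t ^ (\<Sum>i\<in>S. s i))" for t
  proof -
    have "?h t = (\<Prod>i\<in>I. (- (v t ^ s i)) + 1)" by simp
    also have "\<dots> = (\<Sum>X\<in>Pow I. (\<Prod>i\<in>X. - (v t ^ s i)) * (\<Prod>i\<in>I - X. 1))"
      by (rule prod_add[OF I])
    also have "\<dots> = (\<Sum>S\<in>Pow I. (-1) ^ card S * v t ^ (\<Sum>i\<in>S. s i))"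
      by (intro sum.cong refl) (simp add: prod_uminus power_sum)
    finally show ?thesis .
  qed
  have B: "(\<Sum>t<N. ?D t * ?h t) = (\<Sum>S\<in>Pow I. (-1) ^ card S * ?X S)"
    unfolding hexp by (simp add: sum_distrib_left sum_distrib_right algebra_simps sum.swap[of _ "Pow I"])
  have C: "\<bar>?X S - ?L S\<bar> \<le> 2 * \<epsilon> + real (s 1) * \<delta> + (1 - v N ^ (s 1 + (\<Sum>i\<in>I. s i)))" if S: "S \<in> Pow I" for S
  proof -
    have c1: "\<bar>?X S - ?L S\<bar> \<le> 2 * \<epsilon> + real (s 1) * \<delta> + (1 - v N ^ (s 1 + (\<Sum>i\<in>S. s i)))"
      by (rule DW[where F="F 1" and a="s 1", OF v0 mono le1 step s1 F0]) (use Fap in auto)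
    have c2: "v N ^ (s 1 + (\<Sum>i\<in>I. s i)) \<le> v N ^ (s 1 + (\<Sum>i\<in>S. s i))"
    proof (rule power_decreasing)
      show "s 1 + (\<Sum>i\<in>S. s i) \<le> s 1 + (\<Sum>i\<in>I. s i)"
        using S I by (auto intro: sum_mono2)
    qed (use nn le1 in auto)
    from c1 c2 show ?thesis by simp
  qed
  have E: "\<bar>(\<Sum>S\<in>Pow I. (-1) ^ card S * ?X S) - (\<Sum>S\<in>Pow I. (-1) ^ card S * ?L S)\<bar>
      \<le> 2 ^ card I * (2 * \<epsilon> + real (s 1) * \<delta> + (1 - v N ^ (s 1 + (\<Sum>i\<in>I. s i))))"
  proof -
    have "\<bar>(\<Sum>S\<in>Pow I. (-1) ^ card S * ?X S) - (\<Sum>S\<in>Pow I. (-1) ^ card S * ?L S)\<bar>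
        = \<bar>\<Sum>S\<in>Pow I. (-1) ^ card S * (?X S - ?L S)\<bar>"
      by (simp add: sum_subtractf[symmetric] algebra_simps)
    also have "\<dots> \<le> (\<Sum>S\<in>Pow I. \<bar>(-1) ^ card S * (?X S - ?L S)\<bar>)" by (rule sum_abs)
    also have "\<dots> \<le> (\<Sum>S\<in>Pow I. 2 * \<epsilon> + real (s 1) * \<delta> + (1 - v N ^ (s 1 + (\<Sum>i\<in>I. s i))))"
      by (rule sum_mono) (use C in \<open>auto simp: abs_mult\<close>)
    also have "\<dots> = 2 ^ card I * (2 * \<epsilon> + real (s 1) * \<delta> + (1 - v N ^ (s 1 + (\<Sum>i\<in>I. s i))))"
      using I by (simp add: card_Pow)
    finally show ?thesis .
  qed
  have L: "(\<Sum>S\<in>Pow I. (-1) ^ card S * real (s 1) / real (s 1 + (\<Sum>i\<in>S. s i))) = (\<Sum>S\<in>Pow I. (-1) ^ card S * ?L S)"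
    by simp
  show ?thesis unfolding L using A B E by linarith
qed


lemma stake_mono_set: "l \<le> t \<Longrightarrow> set (stake l w) \<subseteq> set (stake t w)"
proof -
  assume lt: "l \<le> t"
  have "stake t w = stake l w @ stake (t - l) (sdrop l w)" using stake_add[of l w "t - l"] lt by simp
  then show ?thesis by (simp del: stake_add)
qed

lemma ct_fin: "\<exists>t. M \<subseteq> set (stake t w) \<Longrightarrow> completion_time M w = enat (LEAST t. M \<subseteq> set (stake t w))"
  unfolding completion_time_def by (rule if_P)

lemma ct_inf: "\<not> (\<exists>t. M \<subseteq> set (stake t w)) \<Longrightarrow> completion_time M w = \<infinity>"
  unfolding completion_time_def by (rule if_not_P)

lemma ct_le: "completion_time M w \<le> enat t \<longleftrightarrow> M \<subseteq> set (stake t w)"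
proof
  assume h: "M \<subseteq> set (stake t w)"
  then have ex: "\<exists>t. M \<subseteq> set (stake t w)" by blast
  have "(LEAST t. M \<subseteq> set (stake t w)) \<le> t" using h by (rule Least_le)
  then show "completion_time M w \<le> enat t" unfolding ct_fin[OF ex] by simp
next
  assume a: "completion_time M w \<le> enat t"
  have ex: "\<exists>t. M \<subseteq> set (stake t w)"
  proof (rule ccontr)
    assume "\<not> (\<exists>t. M \<subseteq> set (stake t w))"
    then have "completion_time M w = \<infinity>" by (rule ct_inf)
    with a show False by simp
  qed
  define l where "l = (LEAST t. M \<subseteq> set (stake t w))"
  have l: "M \<subseteq> set (stake l w)" unfolding l_def using ex by (rule LeastI_ex)
  have "completion_time M w = enat l" unfolding l_def by (rule ct_fin[OF ex])
  then have "l \<le> t" using a by simp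
  then show "M \<subseteq> set (stake t w)" using l stake_mono_set[of l t w] by (rule_tac order_trans) auto
qed

lemma ct_pos: "M \<noteq> {} \<Longrightarrow> \<not> completion_time M w \<le> enat 0"
  by (simp add: ct_le)

lemma cS_sigma: "sigma_finite_measure (cS n)"
  by (rule prob_space_imp_sigma_finite[OF cS_prob])

lemma measure_PiE:
  fixes I :: "nat set"
  assumes I: "finite I" and X: "\<And>i. i \<in> I \<Longrightarrow> X i \<in> sets (cS n)"
  shows "measure (PiM I (\<lambda>_. cS n)) (PiE I X) = (\<Prod>i\<in>I. measure (cS n) (X i))"
proof -
  interpret P: product_sigma_finite "\<lambda>_::nat. cS n"
    unfolding product_sigma_finite_def using cS_sigma by simp
  interpret S: prob_space "cS n" by (rule cS_prob)
  have "emeasure (PiM I (\<lambda>_. cS n)) (PiE I X) = (\<Prod>i\<in>I. emeasure (cS n) (X i))"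
    using P.emeasure_PiM[of I X] I X by simp
  also have "\<dots> = (\<Prod>i\<in>I. ennreal (measure (cS n) (X i)))"
    by (simp add: S.emeasure_eq_measure)
  also have "\<dots> = ennreal (\<Prod>i\<in>I. measure (cS n) (X i))"
    by (rule prod_ennreal) simp
  finally have e: "emeasure (PiM I (\<lambda>_. cS n)) (PiE I X) = ennreal (\<Prod>i\<in>I. measure (cS n) (X i))" .
  have "0 \<le> (\<Prod>i\<in>I. measure (cS n) (X i))" by (rule prod_nonneg) simp
  then show ?thesis unfolding measure_def e by (rule enn2real_ennreal)
qed


lemma uu_0: "uu n 0 = 0" by (simp add: uu_def)

lemma q_01: "n \<ge> 1 \<Longrightarrow> 0 \<le> 1 - 1 / real n \<and> 1 - 1 / real n \<le> 1"
  by auto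

lemma uu_mono: "n \<ge> 1 \<Longrightarrow> uu n t \<le> uu n (Suc t)"
  unfolding uu_def using q_01[of n] by (simp add: mult_left_le_one_le)

lemma uu_le1: "n \<ge> 1 \<Longrightarrow> uu n t \<le> 1"
  unfolding uu_def using q_01[of n] by simp

lemma uu_step: "n \<ge> 1 \<Longrightarrow> uu n (Suc t) - uu n t \<le> 1 / real n"
proof -
  assume n: "n \<ge> 1"
  have "uu n (Suc t) - uu n t = (1 - 1 / real n) ^ t * (1 / real n)"
    unfolding uu_def by (simp add: algebra_simps)
  also have "\<dots> \<le> 1 * (1 / real n)"
    using q_01[OF n] by (intro mult_right_mono power_le_one) auto
  finally show ?thesis by simp
qed

lemma uu_tail: "n \<ge> 1 \<Longrightarrow> 1 - uu n N ^ m \<le> real m * (1 - 1 / real n) ^ N"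
proof -
  assume n: "n \<ge> 1"
  have "1 ^ m - uu n N ^ m \<le> real m * (1 - uu n N)"
    by (rule P1) (use q_01[OF n] in \<open>auto simp: uu_def intro: power_le_one\<close>)
  then show ?thesis by (simp add: uu_def)
qed

context
  fixes n k :: nat and M :: "nat \<Rightarrow> nat set"
  assumes n: "n \<ge> 1" and k: "k \<ge> 1"
    and Msub: "\<And>i. i \<in> {1..k} \<Longrightarrow> M i \<subseteq> {1..n}"
    and Mne: "\<And>i. i \<in> {1..k} \<Longrightarrow> M i \<noteq> {}"
begin

abbreviation "\<Omega> \<equiv> PiM {1..k} (\<lambda>_::nat. cS n)"
abbreviation "ct i \<omega> \<equiv> completion_time (M i) (\<omega> i)"
definition "AA i t = {w. M i \<subseteq> set (stake t w)}"

lemma mem_AA: "w \<in> AA i t \<longleftrightarrow> completion_time (M i) w \<le> enat t"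
  by (simp add: AA_def ct_le)

lemma one_in: "1 \<in> {1..k}" using k by simp

definition "EE = {\<omega> \<in> space \<Omega>. \<forall>i\<in>{1..k}. ct 1 \<omega> \<le> ct i \<omega>}"
definition "BB t = {\<omega> \<in> space \<Omega>. \<omega> 1 \<in> AA 1 (Suc t) - AA 1 t \<and> (\<forall>i\<in>{2..k}. \<omega> i \<notin> AA i t)}"
definition "GG N = {\<omega> \<in> EE. ct 1 \<omega> \<le> enat N}"

lemma finM: "i \<in> {1..k} \<Longrightarrow> finite (M i)"
  by (rule finite_subset[OF Msub]) auto

lemma AA_sets: "i \<in> {1..k} \<Longrightarrow> AA i t \<in> sets (cS n)"
  unfolding AA_def by (rule seen_sets[OF finM])

lemma AA_csets: "i \<in> {1..k} \<Longrightarrow> - AA i t \<in> sets (cS n)"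
  using sets.compl_sets[OF AA_sets, of i t] by (simp add: Compl_eq_Diff_UNIV)

lemma AA_Dsets: "AA 1 (Suc t) - AA 1 t \<in> sets (cS n)"
  using one_in by (intro sets.Diff AA_sets)

lemma AA_mono: "AA i t \<subseteq> AA i (Suc t)"
proof
  fix w assume "w \<in> AA i t"
  then have "M i \<subseteq> set (stake t w)" by (simp add: AA_def)
  also have "\<dots> \<subseteq> set (stake (Suc t) w)" by (rule stake_mono_set) simp
  finally show "w \<in> AA i (Suc t)" by (simp add: AA_def del: stake.simps)
qed

lemma space_Omega: "space \<Omega> = PiE {1..k} (\<lambda>_. UNIV)"
  by (simp add: space_PiM)

lemma BB_PiE: "BB t = PiE {1..k} (\<lambda>i. if i = 1 then AA 1 (Suc t) - AA 1 t else - AA i t)"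
proof (intro equalityI subsetI)
  fix \<omega> assume "\<omega> \<in> BB t"
  then show "\<omega> \<in> PiE {1..k} (\<lambda>i. if i = 1 then AA 1 (Suc t) - AA 1 t else - AA i t)"
    unfolding BB_def space_Omega PiE_iff by auto
next
  fix \<omega> assume w: "\<omega> \<in> PiE {1..k} (\<lambda>i. if i = 1 then AA 1 (Suc t) - AA 1 t else - AA i t)"
  then have e: "\<omega> \<in> extensional {1..k}" and a: "\<And>i. i \<in> {1..k} \<Longrightarrow> \<omega> i \<in> (if i = 1 then AA 1 (Suc t) - AA 1 t else - AA i t)"
    unfolding PiE_iff by auto
  have "\<omega> 1 \<in> AA 1 (Suc t) - AA 1 t" using a[OF one_in] by simp
  moreover have "\<omega> i \<notin> AA i t" if "i \<in> {2..k}" for i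
    using a[of i] that by auto
  ultimately show "\<omega> \<in> BB t" unfolding BB_def space_Omega PiE_iff using e by auto
qed

lemma BB_sets: "BB t \<in> sets \<Omega>"
  unfolding BB_PiE
  by (rule sets_PiM_I_finite) (use AA_Dsets AA_csets in auto)

lemma measure_BB: "measure \<Omega> (BB t) = (Fc n (M 1) (Suc t) - Fc n (M 1) t) * (\<Prod>i\<in>{2..k}. 1 - Fc n (M i) t)"
proof -
  interpret S: prob_space "cS n" by (rule cS_prob)
  have "measure \<Omega> (BB t) = (\<Prod>i\<in>{1..k}. measure (cS n) (if i = 1 then AA 1 (Suc t) - AA 1 t else - AA i t))"
    unfolding BB_PiE
    by (rule measure_PiE) (use AA_Dsets AA_csets in auto)
  also have "\<dots> = measure (cS n) (AA 1 (Suc t) - AA 1 t) * (\<Prod>i\<in>{2..k}. measure (cS n) (- AA i t))"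
  proof -
    have e: "{1..k} = insert 1 {2..k}" using k by auto
    show ?thesis unfolding e by (subst prod.insert) (auto intro!: prod.cong)
  qed
  also have "measure (cS n) (AA 1 (Suc t) - AA 1 t) = Fc n (M 1) (Suc t) - Fc n (M 1) t"
    unfolding Fc_def AA_def[symmetric]
    by (rule S.finite_measure_Diff) (use AA_sets AA_mono one_in k in auto)
  also have "(\<Prod>i\<in>{2..k}. measure (cS n) (- AA i t)) = (\<Prod>i\<in>{2..k}. 1 - Fc n (M i) t)"
  proof (rule prod.cong[OF refl])
    fix i assume i: "i \<in> {2..k}"
    have "- AA i t = space (cS n) - AA i t" by auto
    then show "measure (cS n) (- AA i t) = 1 - Fc n (M i) t"
      unfolding Fc_def AA_def[symmetric] using S.prob_compl[OF AA_sets, of i t] i by simp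
  qed
  finally show ?thesis .
qed

lemma ct_inf_iff: "x = (\<infinity>::enat) \<longleftrightarrow> (\<forall>t. \<not> x \<le> enat t)"
  by (cases x) auto

lemma GG0: "GG 0 = {}"
  unfolding GG_def using ct_pos[OF Mne[OF one_in]] by auto

lemma GG_Suc: "GG (Suc N) = GG N \<union> BB N"
proof (intro equalityI subsetI)
  fix \<omega> assume w: "\<omega> \<in> GG (Suc N)"
  show "\<omega> \<in> GG N \<union> BB N"
  proof (cases "ct 1 \<omega> \<le> enat N")
    case True then show ?thesis using w by (auto simp: GG_def)
  next
    case False
    have E: "\<omega> \<in> space \<Omega>" "\<forall>i\<in>{1..k}. ct 1 \<omega> \<le> ct i \<omega>" "ct 1 \<omega> \<le> enat (Suc N)"
      using w by (auto simp: GG_def EE_def)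
    have "\<omega> 1 \<in> AA 1 (Suc N) - AA 1 N" using E(3) False by (simp add: mem_AA)
    moreover have "\<omega> i \<notin> AA i N" if i: "i \<in> {2..k}" for i
    proof
      assume "\<omega> i \<in> AA i N"
      then have "ct i \<omega> \<le> enat N" by (simp add: mem_AA)
      moreover have "ct 1 \<omega> \<le> ct i \<omega>" using E(2) i by auto
      ultimately show False using False by (meson order_trans)
    qed
    ultimately show ?thesis using E(1) by (auto simp: BB_def)
  qed
next
  fix \<omega> assume w: "\<omega> \<in> GG N \<union> BB N"
  show "\<omega> \<in> GG (Suc N)"
  proof (cases "\<omega> \<in> GG N")
    case True then show ?thesis by (auto simp: GG_def intro: order_trans)
  next
    case False
    then have B: "\<omega> \<in> BB N" using w by auto
    then have sp: "\<omega> \<in> space \<Omega>" and c1: "ct 1 \<omega> \<le> enat (Suc N)"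
      and ci: "\<And>i. i \<in> {2..k} \<Longrightarrow> \<not> ct i \<omega> \<le> enat N"
      by (auto simp: BB_def mem_AA)
    have "ct 1 \<omega> \<le> ct i \<omega>" if i: "i \<in> {1..k}" for i
    proof (cases "i = 1")
      case True then show ?thesis by simp
    next
      case False
      then have "i \<in> {2..k}" using i by auto
      then have "enat N < ct i \<omega>" using ci not_le by blast
      then have "enat (Suc N) \<le> ct i \<omega>" by (simp add: Suc_ile_eq)
      then show ?thesis using c1 by (rule order_trans[rotated])
    qed
    then show ?thesis using sp c1 by (auto simp: GG_def EE_def)
  qed
qed

lemma BB_disj: "GG N \<inter> BB N = {}"
  by (auto simp: GG_def BB_def mem_AA)

lemma GG_eq: "GG N = (\<Union>t<N. BB t)"
  by (induction N) (auto simp: GG0 GG_Suc lessThan_Suc)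

lemma GG_sets: "GG N \<in> sets \<Omega>"
  unfolding GG_eq by (intro sets.finite_UN BB_sets) auto

lemma measure_GG: "measure \<Omega> (GG N) = (\<Sum>t<N. measure \<Omega> (BB t))"
proof (induction N)
  case 0 then show ?case by (simp add: GG0)
next
  case (Suc N)
  interpret P: prob_space \<Omega>
    by (rule prob_space_PiM) (rule cS_prob)
  have "measure \<Omega> (GG (Suc N)) = measure \<Omega> (GG N) + measure \<Omega> (BB N)"
    unfolding GG_Suc by (rule P.finite_measure_Union) (use GG_sets BB_sets BB_disj in auto)
  then show ?case using Suc by simp
qed


definition "Einf = PiE {1..k} (\<lambda>i. - (\<Union>t. AA i t))"

lemma EE_eq: "EE = (\<Union>t. BB t) \<union> Einf"
proof (intro equalityI subsetI)
  fix \<omega> assume w: "\<omega> \<in> EE"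
  then have sp: "\<omega> \<in> space \<Omega>" and le: "\<And>i. i \<in> {1..k} \<Longrightarrow> ct 1 \<omega> \<le> ct i \<omega>"
    by (auto simp: EE_def)
  show "\<omega> \<in> (\<Union>t. BB t) \<union> Einf"
  proof (cases "ct 1 \<omega>")
    case (enat m)
    then have "\<omega> \<in> GG m" using w by (simp add: GG_def)
    then show ?thesis unfolding GG_eq by auto
  next
    case infinity
    have "\<omega> i \<notin> AA i t" if i: "i \<in> {1..k}" for i t
    proof -
      have "ct i \<omega> = \<infinity>" using le[OF i] infinity by simp
      then show ?thesis by (simp add: mem_AA)
    qed
    then have "\<omega> \<in> Einf" using sp unfolding Einf_def space_Omega PiE_iff by auto
    then show ?thesis by simp
  qed
next
  fix \<omega> assume w: "\<omega> \<in> (\<Union>t. BB t) \<union> Einf"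
  show "\<omega> \<in> EE"
  proof (cases "\<omega> \<in> Einf")
    case True
    then have e: "\<omega> \<in> extensional {1..k}" and a: "\<And>i t. i \<in> {1..k} \<Longrightarrow> \<omega> i \<notin> AA i t"
      unfolding Einf_def PiE_iff by auto
    have inf: "ct i \<omega> = \<infinity>" if "i \<in> {1..k}" for i
      using a[OF that] by (simp add: mem_AA ct_inf_iff)
    show ?thesis unfolding EE_def space_Omega PiE_iff using e inf one_in by auto
  next
    case False
    then obtain t where "\<omega> \<in> BB t" using w by auto
    then have "\<omega> \<in> GG (Suc t)" by (simp add: GG_Suc)
    then show ?thesis by (simp add: GG_def)
  qed
qed

lemma EE_sets: "EE \<in> sets \<Omega>"
proof -
  have "Einf \<in> sets \<Omega>" unfolding Einf_def
  proof (rule sets_PiM_I_finite)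
    fix i assume i: "i \<in> {1..k}"
    have "(\<Union>t. AA i t) \<in> sets (cS n)" using AA_sets[OF i] by (intro sets.countable_UN) auto
    from sets.compl_sets[OF this] show "- (\<Union>t. AA i t) \<in> sets (cS n)" by (simp add: Compl_eq_Diff_UNIV)
  qed simp
  moreover have "(\<Union>t. BB t) \<in> sets \<Omega>" using BB_sets by (intro sets.countable_UN) auto
  ultimately show ?thesis unfolding EE_eq by (rule sets.Un[rotated])
qed

lemma GG_sub: "GG N \<subseteq> EE" by (auto simp: GG_def)

lemma Q1_EE: "Q1 n k M = measure \<Omega> EE"
  unfolding Q1_def coupon_space_def cS_def[symmetric] EE_def by simp

lemma Q1_lower: "(\<Sum>t<N. measure \<Omega> (BB t)) \<le> Q1 n k M"
proof -
  interpret P: prob_space \<Omega> by (rule prob_space_PiM) (rule cS_prob)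
  show ?thesis unfolding Q1_EE measure_GG[symmetric]
    by (rule P.finite_measure_mono[OF GG_sub EE_sets])
qed

lemma Q1_upper: "Q1 n k M \<le> (\<Sum>t<N. measure \<Omega> (BB t)) + (1 - Fc n (M 1) N)"
proof -
  interpret P: prob_space \<Omega> by (rule prob_space_PiM) (rule cS_prob)
  interpret S: prob_space "cS n" by (rule cS_prob)
  let ?R = "PiE {1..k} (\<lambda>i. if i = 1 then - AA 1 N else UNIV)"
  have Rs: "\<And>i. i \<in> {1..k} \<Longrightarrow> (if i = 1 then - AA 1 N else UNIV) \<in> sets (cS n)"
    using AA_csets one_in by auto
  have R: "?R \<in> sets \<Omega>" by (rule sets_PiM_I_finite) (use Rs in auto)
  have sub: "EE - GG N \<subseteq> ?R"
  proof
    fix \<omega> assume w: "\<omega> \<in> EE - GG N"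
    then have "\<omega> \<in> space \<Omega>" "\<not> ct 1 \<omega> \<le> enat N"
      by (auto simp: EE_def GG_def)
    then have "\<omega> \<in> extensional {1..k}" "\<not> ct 1 \<omega> \<le> enat N"
      unfolding space_Omega PiE_iff by auto
    then show "\<omega> \<in> ?R" unfolding PiE_iff by (auto simp: mem_AA)
  qed
  have mR: "measure \<Omega> ?R = 1 - Fc n (M 1) N"
  proof -
    have "measure \<Omega> ?R = (\<Prod>i\<in>{1..k}. measure (cS n) (if i = 1 then - AA 1 N else UNIV))"
      by (rule measure_PiE) (use Rs in auto)
    also have "\<dots> = measure (cS n) (- AA 1 N) * (\<Prod>i\<in>{2..k}. measure (cS n) UNIV)"
    proof -
      have e: "{1..k} = insert 1 {2..k}" using k by auto
      show ?thesis unfolding e by (subst prod.insert) (auto intro!: prod.cong)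
    qed
    also have "measure (cS n) UNIV = 1" using S.prob_space by simp
    also have "measure (cS n) (- AA 1 N) = 1 - Fc n (M 1) N"
    proof -
      have "- AA 1 N = space (cS n) - AA 1 N" by auto
      then show ?thesis
        unfolding Fc_def AA_def[symmetric] using S.prob_compl[OF AA_sets[OF one_in], of N] by simp
    qed
    finally show ?thesis by simp
  qed
  have "measure \<Omega> EE = measure \<Omega> (GG N) + measure \<Omega> (EE - GG N)"
    using P.finite_measure_Diff[OF EE_sets GG_sets GG_sub] by simp
  also have "measure \<Omega> (EE - GG N) \<le> measure \<Omega> ?R"
    by (rule P.finite_measure_mono[OF sub R])
  finally show ?thesis unfolding Q1_EE measure_GG mR by simp
qed


lemma Fc_0: "Fc n (M 1) 0 = 0"
  unfolding Fc_def using Mne[OF one_in] by simp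

lemma Fc_mono: "i \<in> {1..k} \<Longrightarrow> Fc n (M i) t \<le> Fc n (M i) (Suc t)"
proof -
  assume i: "i \<in> {1..k}"
  interpret S: prob_space "cS n" by (rule cS_prob)
  show ?thesis unfolding Fc_def AA_def[symmetric]
    by (rule S.finite_measure_mono[OF AA_mono AA_sets[OF i]])
qed

lemma Fc_01: "0 \<le> Fc n (M i) t \<and> Fc n (M i) t \<le> 1"
proof -
  interpret S: prob_space "cS n" by (rule cS_prob)
  show ?thesis unfolding Fc_def by simp
qed

lemma Q1_near:
  fixes s :: "nat \<Rightarrow> nat"
  assumes cs: "\<And>i. i \<in> {1..k} \<Longrightarrow> card (M i) = s i"
  shows "\<bar>Q1 n k M - (\<Sum>S\<in>Pow {2..k}. (-1) ^ card S * real (s 1) / real (s 1 + (\<Sum>i\<in>S. s i)))\<bar>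
    \<le> ((real k + 2 ^ k) * (\<Sum>i\<in>{1..k}. 2 ^ s i * (real (s i))^2) + real (s 1)
        + 2 ^ (k - 1) * real (s 1) + 2 ^ (k - 1) * real (s 1 + (\<Sum>i\<in>{2..k}. s i))) / real n"
proof -
  define Em where "Em = (\<Sum>i\<in>{1..k}. 2 ^ s i * (real (s i))^2)"
  define \<epsilon> where "\<epsilon> = Em / real n"
  define m where "m = s 1 + (\<Sum>i\<in>{2..k}. s i)"
  define q where "q = 1 - 1 / real n"
  define L where "L = (\<Sum>S\<in>Pow {2..k}. (-1) ^ card S * real (s 1) / real (s 1 + (\<Sum>i\<in>S. s i)))"
  have q01: "0 \<le> q" "q < 1" using n by (auto simp: q_def)
  obtain N where qN: "q ^ N \<le> 1 / real n"
  proof -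
    have "(\<lambda>N. q ^ N) \<longlonglongrightarrow> 0" by (rule LIMSEQ_power_zero) (use q01 in simp)
    moreover have "0 < 1 / real n" using n by simp
    ultimately have "eventually (\<lambda>N. q ^ N < 1 / real n) sequentially" by (rule order_tendstoD(2))
    then obtain N where "q ^ N < 1 / real n" by (auto simp: eventually_sequentially)
    then show ?thesis using that less_imp_le by blast
  qed
  have s1: "s 1 \<ge> 1"
  proof -
    have "card (M 1) > 0" using Mne[OF one_in] finM[OF one_in] by (simp add: card_gt_0_iff)
    then show ?thesis using cs[OF one_in] by simp
  qed
  have Em_ge: "2 ^ s i * (real (s i))^2 \<le> Em" if "i \<in> {1..k}" for i
    unfolding Em_def by (rule member_le_sum) (use that in auto)
  have Fap: "\<bar>Fc n (M i) t - uu n t ^ s i\<bar> \<le> \<epsilon>" if i: "i \<in> insert 1 {2..k}" for i t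
  proof -
    have i': "i \<in> {1..k}" using i k by auto
    have "\<bar>Fc n (M i) t - uu n t ^ card (M i)\<bar> \<le> 2 ^ card (M i) * (real (card (M i)))^2 / real n"
      by (rule Fc_approx[OF n Msub[OF i']])
    also have "\<dots> \<le> Em / real n" using Em_ge[OF i'] cs[OF i'] by (simp add: divide_right_mono)
    finally show ?thesis using cs[OF i'] by (simp add: \<epsilon>_def)
  qed
  have core_b: "\<bar>(\<Sum>t<N. (Fc n (M 1) (Suc t) - Fc n (M 1) t) * (\<Prod>i\<in>{2..k}. 1 - Fc n (M i) t)) - L\<bar>
      \<le> real (card {2..k}) * \<epsilon> + 2 ^ card {2..k} * (2 * \<epsilon> + real (s 1) * (1 / real n) + (1 - uu n N ^ (s 1 + (\<Sum>i\<in>{2..k}. s i))))"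
    unfolding L_def
    by (rule core[where F="\<lambda>i t. Fc n (M i) t"]) (use uu_0 uu_mono[OF n] uu_le1[OF n] uu_step[OF n] s1 Fc_0 Fc_mono[OF one_in] Fc_01 Fap in auto)
  have sumB: "(\<Sum>t<N. measure \<Omega> (BB t)) = (\<Sum>t<N. (Fc n (M 1) (Suc t) - Fc n (M 1) t) * (\<Prod>i\<in>{2..k}. 1 - Fc n (M i) t))"
    by (rule sum.cong[OF refl]) (rule measure_BB)
  have ck: "real (card {2..k}) = real k - 1" "card {2..k} = k - 1" using k by auto
  have tail_m: "1 - uu n N ^ m \<le> real m / real n"
  proof -
    have "1 - uu n N ^ m \<le> real m * q ^ N" using uu_tail[OF n] by (simp add: q_def)
    also have "\<dots> \<le> real m * (1 / real n)" using qN by (intro mult_left_mono) auto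
    finally show ?thesis by simp
  qed
  have tail1: "1 - Fc n (M 1) N \<le> \<epsilon> + real (s 1) / real n"
  proof -
    have "1 - uu n N ^ s 1 \<le> real (s 1) * q ^ N" using uu_tail[OF n] by (simp add: q_def)
    also have "\<dots> \<le> real (s 1) * (1 / real n)" using qN by (intro mult_left_mono) auto
    finally have "1 - uu n N ^ s 1 \<le> real (s 1) / real n" by simp
    moreover have "\<bar>Fc n (M 1) N - uu n N ^ s 1\<bar> \<le> \<epsilon>" using Fap by simp
    ultimately show ?thesis by linarith
  qed
  have lo: "(\<Sum>t<N. measure \<Omega> (BB t)) \<le> Q1 n k M" by (rule Q1_lower)
  have up: "Q1 n k M \<le> (\<Sum>t<N. measure \<Omega> (BB t)) + (1 - Fc n (M 1) N)" by (rule Q1_upper)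
  define Sg where "Sg = (\<Sum>t<N. (Fc n (M 1) (Suc t) - Fc n (M 1) t) * (\<Prod>i\<in>{2..k}. 1 - Fc n (M i) t))"
  have cb: "\<bar>Sg - L\<bar> \<le> real (k - 1) * \<epsilon> + 2 ^ (k - 1) * (2 * \<epsilon> + real (s 1) * (1 / real n) + (1 - uu n N ^ m))"
    using core_b unfolding ck(2) Sg_def m_def .
  have p2: "(2::real) ^ (k - 1) \<ge> 0" by simp
  have mf: "2 ^ (k - 1) * (2 * \<epsilon> + real (s 1) * (1 / real n) + (1 - uu n N ^ m))
      \<le> 2 ^ (k - 1) * (2 * \<epsilon> + real (s 1) * (1 / real n) + real m / real n)"
    using tail_m p2 by (intro mult_left_mono) auto
  have lo': "Sg \<le> Q1 n k M" using lo unfolding sumB Sg_def .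
  have up': "Q1 n k M \<le> Sg + (1 - Fc n (M 1) N)" using up unfolding sumB Sg_def .
  have "\<bar>Q1 n k M - L\<bar> \<le> \<epsilon> + real (s 1) / real n + real (k - 1) * \<epsilon>
      + 2 ^ (k - 1) * (2 * \<epsilon> + real (s 1) * (1 / real n) + real m / real n)"
  proof (rule abs_leI)
    show "Q1 n k M - L \<le> \<epsilon> + real (s 1) / real n + real (k - 1) * \<epsilon>
      + 2 ^ (k - 1) * (2 * \<epsilon> + real (s 1) * (1 / real n) + real m / real n)"
      using abs_le_D1[OF cb] mf up' tail1 by linarith
    show "- (Q1 n k M - L) \<le> \<epsilon> + real (s 1) / real n + real (k - 1) * \<epsilon>
      + 2 ^ (k - 1) * (2 * \<epsilon> + real (s 1) * (1 / real n) + real m / real n)"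
    proof -
      have "0 \<le> \<epsilon>" unfolding \<epsilon>_def Em_def by (intro divide_nonneg_nonneg sum_nonneg) auto
      moreover have "0 \<le> real (s 1) / real n" by simp
      ultimately show ?thesis using abs_le_D2[OF cb] mf lo' by linarith
    qed
  qed
  also have "\<dots> = ((real k + 2 ^ k) * Em + real (s 1) + 2 ^ (k - 1) * real (s 1) + 2 ^ (k - 1) * real m) / real n"
  proof -
    have "(2::real) ^ k = 2 ^ (k - 1) * 2" using k by (metis Suc_diff_1 less_le_trans power_Suc2 zero_less_one)
    then show ?thesis using n ck(1) unfolding \<epsilon>_def by (simp add: field_simps)
  qed
  finally show ?thesis unfolding L_def Em_def m_def .
qed

end


theorem mainTheorem5:
  fixes k :: nat and s :: "nat \<Rightarrow> nat" and M :: "nat \<Rightarrow> nat \<Rightarrow> nat set"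
  assumes "k \<ge> 1"
    and "\<forall>i\<in>{1..k}. s i > 0"
    and "eventually (\<lambda>n. \<forall>i\<in>{1..k}. M n i \<subseteq> {1..n} \<and> card (M n i) = s i) sequentially"
  shows "(\<lambda>n. Q1 n k (M n)) \<longlonglongrightarrow>
           (\<Sum>S\<in>Pow {2..k}. (-1) ^ card S * real (s 1) / real (s 1 + (\<Sum>i\<in>S. s i)))"
proof -
  define L where "L = (\<Sum>S\<in>Pow {2..k}. (-1) ^ card S * real (s 1) / real (s 1 + (\<Sum>i\<in>S. s i)))"
  define C where "C = ((real k + 2 ^ k) * (\<Sum>i\<in>{1..k}. 2 ^ s i * (real (s i))^2) + real (s 1)
        + 2 ^ (k - 1) * real (s 1) + 2 ^ (k - 1) * real (s 1 + (\<Sum>i\<in>{2..k}. s i)))"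
  have ev: "eventually (\<lambda>n. norm (Q1 n k (M n) - L) \<le> C / real n) sequentially"
    using eventually_conj[OF assms(3) eventually_ge_at_top[of 1]]
  proof (rule eventually_mono)
    fix n assume h: "(\<forall>i\<in>{1..k}. M n i \<subseteq> {1..n} \<and> card (M n i) = s i) \<and> 1 \<le> n"
    have ne: "M n i \<noteq> {}" if "i \<in> {1..k}" for i
      using h assms(2) that by fastforce
    have "\<bar>Q1 n k (M n) - L\<bar> \<le> C / real n"
      unfolding L_def C_def
      by (rule Q1_near) (use h assms(1) ne in auto)
    then show "norm (Q1 n k (M n) - L) \<le> C / real n" by simp
  qed
  have "(\<lambda>n. C / real n) \<longlonglongrightarrow> 0" by (rule lim_const_over_n)
  with ev have "(\<lambda>n. Q1 n k (M n) - L) \<longlonglongrightarrow> 0" by (rule Lim_null_comparison)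
  then show ?thesis unfolding L_def[symmetric] by (rule LIM_zero_cancel)
qed


end
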